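(* Let $n\ge2$ and let $\varphi:\Delta_n^\circ\to\mathbb{R}$ be a regular exponentially concave function. The following are equivalent: (i) $L_\varphi$ is perturbation invariant: $L_\varphi(\mathbf{q}\oplus\mathbf{h}\,\|\,\mathbf{p}\oplus\mathbf{h})=L_\varphi(\mathbf{q}\,\|\,\mathbf{p})$ for all $\mathbf{p},\mathbf{q},\mathbf{h}\in\Delta_n^\circ$; (ii) there exist $\boldsymbol{\pi}\in\Delta_n^\circ$ and $c\in\mathbb{R}$ such that $\varphi(\mathbf{p})=-H^\times(\boldsymbol{\pi}\|\mathbf{p})+c=\sum_{i=1}^n\pi_i\log p_i+c$ for all $\mathbf{p}\in\Delta_n^\circ$.
   Context: $\Delta_n^\circ=\{\mathbf{x}\in(0,1]^n:\sum_ix_i=1\}$. Perturbation: $\mathbf{p}\oplus\mathbf{h}=(p_ih_i/\sum_jp_jh_j)_{i}$. Cross-entropy: $H^\times(\mathbf{p}\|\mathbf{q})=-\sum_ip_i\log q_i$. $\varphi$ is exponentially concave if $\Phi=e^\varphi$ is concave on $\Delta_n^\circ$; it is regular if moreover it is $C^4$ on $\Delta_n^\circ$ and $\frac{d^2}{dt^2}\big|_{t=0}\Phi(\mathbf{p}+t\mathbf{v})<0$ for every $\mathbf{p}\in\Delta_n^\circ$ and every nonzero $\mathbf{v}\in\mathbb{R}^n$ with $\sum_iv_i=0$. The logarithmic divergence is $L_\varphi(\mathbf{q}\|\mathbf{p})=\log\big(1+\nabla_{\mathbf{q}-\mathbf{p}}\varphi(\mathbf{p})\big)-(\varphi(\mathbf{q})-\varphi(\mathbf{p}))$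 for $\mathbf{p},\mathbf{q}\in\Delta_n^\circ$, where $\nabla_{\mathbf{v}}\varphi(\mathbf{p})=\frac{d}{dt}\varphi(\mathbf{p}+t\mathbf{v})|_{t=0}$. *)

theory Defs
  imports "HOL-Analysis.Analysis"
begin

definition open_simplex :: "(real^'n::finite) set" where
  "open_simplex = {x. (\<forall>i. 0 < x$i \<and> x$i \<le> 1) \<and> (\<Sum>i\<in>UNIV. x$i) = 1}"

definition perturb :: "real^'n::finite \<Rightarrow> real^'n \<Rightarrow> real^'n" where
  "perturb p h = (\<chi> i. p$i * h$i / (\<Sum>j\<in>UNIV. p$j * h$j))"

definition cross_entropy :: "real^'n::finite \<Rightarrow> real^'n \<Rightarrow> real" where
  "cross_entropy p q = - (\<Sum>i\<in>UNIV. p$i * ln (q$i))"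

definition dir_deriv :: "(real^'n::finite \<Rightarrow> real) \<Rightarrow> real^'n \<Rightarrow> real^'n \<Rightarrow> real" where
  "dir_deriv f v p = deriv (\<lambda>t. f (p + t *\<^sub>R v)) 0"

fun iter_dir_deriv :: "(real^'n::finite \<Rightarrow> real) \<Rightarrow> (real^'n) list \<Rightarrow> real^'n \<Rightarrow> real" where
  "iter_dir_deriv f [] p = f p"
| "iter_dir_deriv f (v # vs) p = dir_deriv (iter_dir_deriv f vs) v p"

definition tangent_dirs :: "(real^'n::finite) set" where
  "tangent_dirs = {v. (\<Sum>i\<in>UNIV. v$i) = 0}"

text \<open>C^k on the open simplex (a relatively open subset of the affine hyperplane
  sum x = 1): all iterated directional derivatives along tangent directions up to
  order k exist and are continuous on the open simplex (existence and continuity of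
  all partial derivatives up to order k in affine coordinates).\<close>
definition Ck_on_simplex :: "nat \<Rightarrow> (real^'n::finite \<Rightarrow> real) \<Rightarrow> bool" where
  "Ck_on_simplex k f \<longleftrightarrow>
     (\<forall>vs. set vs \<subseteq> tangent_dirs \<and> length vs \<le> k \<longrightarrow>
        continuous_on open_simplex (iter_dir_deriv f vs) \<and>
        (length vs < k \<longrightarrow> (\<forall>v\<in>tangent_dirs. \<forall>p\<in>open_simplex.
            (\<lambda>t. iter_dir_deriv f vs (p + t *\<^sub>R v)) differentiable (at 0))))"

definition exp_concave :: "(real^'n::finite \<Rightarrow> real) \<Rightarrow> bool" where
  "exp_concave \<phi> \<longleftrightarrow> concave_on open_simplex (\<lambda>x. exp (\<phi> x))"

definition regular_exp_concave :: "(real^'n::finite \<Rightarrow> real) \<Rightarrow> bool" where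
  "regular_exp_concave \<phi> \<longleftrightarrow> exp_concave \<phi> \<and> Ck_on_simplex 4 \<phi> \<and>
     (\<forall>p\<in>open_simplex. \<forall>v. v \<noteq> 0 \<and> (\<Sum>i\<in>UNIV. v$i) = 0 \<longrightarrow>
        deriv (deriv (\<lambda>t. exp (\<phi> (p + t *\<^sub>R v)))) 0 < 0)"

definition log_div :: "(real^'n::finite \<Rightarrow> real) \<Rightarrow> real^'n \<Rightarrow> real^'n \<Rightarrow> real" where
  "log_div \<phi> q p = ln (1 + dir_deriv \<phi> (q - p) p) - (\<phi> q - \<phi> p)"

end

theory Submission
  imports Defs
begin


lemma simplex_memI:
  fixes x :: "real^'n::finite"
  assumes "\<And>i. 0 < x$i" "(\<Sum>i\<in>UNIV. x$i) = 1"
  shows "x \<in> open_simplex"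
proof -
  have "x$i \<le> 1" for i
  proof -
    have "(\<Sum>j\<in>UNIV. x$j) = x$i + (\<Sum>j\<in>UNIV-{i}. x$j)"
      by (simp add: sum.remove)
    moreover have "(\<Sum>j\<in>UNIV-{i}. x$j) \<ge> 0"
      by (rule sum_nonneg) (use assms(1) less_imp_le in auto)
    ultimately show ?thesis using assms(2) by linarith
  qed
  thus ?thesis using assms unfolding open_simplex_def by auto
qed

lemma simplex_pos: "x \<in> open_simplex \<Longrightarrow> 0 < x$i"
  unfolding open_simplex_def by auto

lemma simplex_sum: "x \<in> open_simplex \<Longrightarrow> (\<Sum>i\<in>UNIV. x$i) = 1"
  unfolding open_simplex_def by auto

lemma tangent_iff: "v \<in> tangent_dirs \<longleftrightarrow> (\<Sum>i\<in>UNIV. v$i) = 0"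
  unfolding tangent_dirs_def by auto

lemma eventually_in_simplex:
  fixes p v :: "real^'n::finite"
  assumes "p \<in> open_simplex" "v \<in> tangent_dirs"
  shows "eventually (\<lambda>t. p + t *\<^sub>R v \<in> open_simplex) (nhds 0)"
proof -
  have "eventually (\<lambda>t. \<forall>i. 0 < p$i + t * v$i) (nhds 0)"
  proof (rule eventually_all_finite)
    fix i
    have pi: "0 < p$i" using assms(1) simplex_pos by blast
    show "eventually (\<lambda>t. 0 < p$i + t * v$i) (nhds 0)"
      unfolding eventually_nhds_metric
    proof (intro exI[of _ "p$i / (\<bar>v$i\<bar> + 1)"] conjI allI impI)
      show "0 < p$i / (\<bar>v$i\<bar> + 1)" using pi by simp
      fix t :: real assume "dist t 0 < p$i / (\<bar>v$i\<bar> + 1)"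
      hence "\<bar>t\<bar> * (\<bar>v$i\<bar> + 1) < p$i" by (simp add: field_simps)
      moreover have "\<bar>t * v$i\<bar> \<le> \<bar>t\<bar> * (\<bar>v$i\<bar> + 1)"
        by (simp add: abs_mult mult_left_mono)
      ultimately show "0 < p$i + t * v$i" by linarith
    qed
  qed
  thus ?thesis
  proof (rule eventually_mono)
    fix t assume "\<forall>i. 0 < p$i + t * v$i"
    moreover have "(\<Sum>i\<in>UNIV. (p + t *\<^sub>R v)$i) = 1"
      using assms by (simp add: sum.distrib simplex_sum tangent_iff sum_distrib_left[symmetric])
    ultimately show "p + t *\<^sub>R v \<in> open_simplex"
      by (intro simplex_memI) auto
  qed
qed

lemma deriv_nonneg_right:
  fixes f :: "real \<Rightarrow> real"
  assumes "(f has_real_derivative D) (at 0)" "f 0 = 0"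
    and "\<exists>d>0. \<forall>t. 0 < t \<and> t < d \<longrightarrow> f t \<ge> 0"
  shows "D \<ge> 0"
proof (rule ccontr)
  assume "\<not> D \<ge> 0" hence "D < 0" by simp
  from DERIV_neg_dec_right[OF assms(1) this] obtain d1 where
    d1: "d1 > 0" "\<forall>h>0. h < d1 \<longrightarrow> f 0 > f (0+h)" by blast
  from assms(3) obtain d where d: "d > 0" "\<forall>t. 0 < t \<and> t < d \<longrightarrow> f t \<ge> 0" by blast
  define h where "h = min d d1 / 2"
  have "h > 0" "h < d" "h < d1" using d d1 unfolding h_def by auto
  thus False using d(2) d1(2) assms(2) by force
qed

lemma pos_mult_nonneg: "0 < (a::real) \<Longrightarrow> 0 \<le> a * x \<Longrightarrow> 0 \<le> x"
  by (simp add: zero_le_mult_iff)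

context
  fixes \<phi> :: "real^'n::finite \<Rightarrow> real"
  assumes reg: "regular_exp_concave \<phi>"
begin

lemma line_diff:
  assumes "p \<in> open_simplex" "v \<in> tangent_dirs"
  shows "((\<lambda>t. \<phi> (p + t *\<^sub>R v)) has_real_derivative dir_deriv \<phi> v p) (at 0)"
proof -
  have ck: "Ck_on_simplex 4 \<phi>" using reg unfolding regular_exp_concave_def by auto
  have "(\<lambda>t. iter_dir_deriv \<phi> [] (p + t *\<^sub>R v)) differentiable (at 0)"
  proof -
    have "\<forall>v\<in>tangent_dirs. \<forall>p\<in>open_simplex. (\<lambda>t. iter_dir_deriv \<phi> [] (p + t *\<^sub>R v)) differentiable (at 0)"
      using ck unfolding Ck_on_simplex_def by (drule_tac x="[]" in spec) simp
    thus ?thesis using assms by blast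
  qed
  hence "(\<lambda>t. \<phi> (p + t *\<^sub>R v)) differentiable (at 0)" by simp
  thus ?thesis unfolding dir_deriv_def
    using DERIV_deriv_iff_real_differentiable by blast
qed

lemma line_diff_at:
  assumes "p \<in> open_simplex" "v \<in> tangent_dirs" "p + t0 *\<^sub>R v \<in> open_simplex"
  shows "((\<lambda>t. \<phi> (p + t *\<^sub>R v)) has_real_derivative dir_deriv \<phi> v (p + t0 *\<^sub>R v)) (at t0)"
proof -
  have "((\<lambda>t. \<phi> ((p + t0 *\<^sub>R v) + t *\<^sub>R v)) has_real_derivative dir_deriv \<phi> v (p + t0 *\<^sub>R v)) (at 0)"
    using line_diff assms by blast
  moreover have "(\<lambda>t. \<phi> ((p + t0 *\<^sub>R v) + t *\<^sub>R v)) = (\<lambda>t. (\<lambda>t. \<phi> (p + t *\<^sub>R v)) (t + t0))"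
    by (simp add: scaleR_add_left algebra_simps)
  ultimately show ?thesis using DERIV_shift[of "\<lambda>t. \<phi> (p + t *\<^sub>R v)" _ 0 t0] by simp
qed

lemma dd_scale:
  assumes "p \<in> open_simplex" "v \<in> tangent_dirs"
  shows "dir_deriv \<phi> (c *\<^sub>R v) p = c * dir_deriv \<phi> v p"
proof -
  have g: "((\<lambda>t. c * t) has_real_derivative c) (at 0)"
    by (auto intro!: derivative_eq_intros)
  have f: "((\<lambda>t. \<phi> (p + t *\<^sub>R v)) has_real_derivative dir_deriv \<phi> v p) (at (c * 0))"
    using line_diff[OF assms] by simp
  have "((\<lambda>t. \<phi> (p + (c * t) *\<^sub>R v)) has_real_derivative dir_deriv \<phi> v p * c) (at 0)"
    using DERIV_chain2[OF f g] by simp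
  moreover have "(\<lambda>t. \<phi> (p + t *\<^sub>R (c *\<^sub>R v))) = (\<lambda>t. \<phi> (p + (c * t) *\<^sub>R v))"
    by (simp add: mult.commute)
  ultimately have "((\<lambda>t. \<phi> (p + t *\<^sub>R (c *\<^sub>R v))) has_real_derivative c * dir_deriv \<phi> v p) (at 0)"
    by (simp add: mult.commute)
  thus ?thesis unfolding dir_deriv_def by (rule DERIV_imp_deriv)
qed

lemma Phi_concave: "concave_on open_simplex (\<lambda>x. exp (\<phi> x))"
  using reg unfolding regular_exp_concave_def exp_concave_def by auto

lemma exp_line_diff:
  assumes "p \<in> open_simplex" "v \<in> tangent_dirs"
  shows "((\<lambda>t. exp (\<phi> (p + t *\<^sub>R v))) has_real_derivative exp (\<phi> p) * dir_deriv \<phi> v p) (at 0)"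
proof -
  have "((\<lambda>t. exp (\<phi> (p + t *\<^sub>R v))) has_real_derivative exp (\<phi> (p + 0 *\<^sub>R v)) * dir_deriv \<phi> v p) (at 0)"
    by (rule DERIV_chain2[OF DERIV_exp line_diff[OF assms]])
  thus ?thesis by simp
qed

lemma dd_superadd:
  assumes p: "p \<in> open_simplex" and v: "v \<in> tangent_dirs" and w: "w \<in> tangent_dirs"
  shows "dir_deriv \<phi> (v + w) p \<ge> dir_deriv \<phi> v p + dir_deriv \<phi> w p"
proof -
  have v2: "2 *\<^sub>R v \<in> tangent_dirs" and w2: "2 *\<^sub>R w \<in> tangent_dirs" and vw: "v + w \<in> tangent_dirs"
    using v w by (auto simp: tangent_iff sum.distrib sum_distrib_left[symmetric])
  have ev: "eventually (\<lambda>t. p + t *\<^sub>R (2 *\<^sub>R v) \<in> open_simplex \<and> p + t *\<^sub>R (2 *\<^sub>R w) \<in> open_simplex) (nhds 0)"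
    using eventually_in_simplex[OF p v2] eventually_in_simplex[OF p w2] by (rule eventually_conj)
  then obtain d where d: "d > 0" "\<forall>t. dist t 0 < d \<longrightarrow> p + t *\<^sub>R (2 *\<^sub>R v) \<in> open_simplex \<and> p + t *\<^sub>R (2 *\<^sub>R w) \<in> open_simplex"
    unfolding eventually_nhds_metric by blast
  define f where "f t = exp (\<phi> (p + t *\<^sub>R (v + w))) - (1/2) * exp (\<phi> (p + t *\<^sub>R (2 *\<^sub>R v))) - (1/2) * exp (\<phi> (p + t *\<^sub>R (2 *\<^sub>R w)))" for t
  have fd: "(f has_real_derivative exp (\<phi> p) * dir_deriv \<phi> (v + w) p - (1/2) * (exp (\<phi> p) * dir_deriv \<phi> (2 *\<^sub>R v) p) - (1/2) * (exp (\<phi> p) * dir_deriv \<phi> (2 *\<^sub>R w) p)) (at 0)"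
    unfolding f_def
    by (rule DERIV_diff[OF DERIV_diff[OF exp_line_diff[OF p vw] DERIV_cmult[OF exp_line_diff[OF p v2]]] DERIV_cmult[OF exp_line_diff[OF p w2]]])
  have f0: "f 0 = 0" unfolding f_def by simp
  have fpos: "\<exists>d>0. \<forall>t. 0 < t \<and> t < d \<longrightarrow> f t \<ge> 0"
  proof (intro exI[of _ d] conjI allI impI)
    show "d > 0" by fact
    fix t assume t: "0 < t \<and> t < d"
    hence A: "p + t *\<^sub>R (2 *\<^sub>R v) \<in> open_simplex" and B: "p + t *\<^sub>R (2 *\<^sub>R w) \<in> open_simplex"
      using d(2) by auto
    have eq: "p + t *\<^sub>R (v + w) = (1/2) *\<^sub>R (p + t *\<^sub>R (2 *\<^sub>R v)) + (1/2) *\<^sub>R (p + t *\<^sub>R (2 *\<^sub>R w))"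
      unfolding vec_eq_iff by (simp add: algebra_simps)
    have "exp (\<phi> ((1/2) *\<^sub>R (p + t *\<^sub>R (2 *\<^sub>R v)) + (1/2) *\<^sub>R (p + t *\<^sub>R (2 *\<^sub>R w))))
        \<ge> (1/2) * exp (\<phi> (p + t *\<^sub>R (2 *\<^sub>R v))) + (1/2) * exp (\<phi> (p + t *\<^sub>R (2 *\<^sub>R w)))"
      using concave_onD[OF Phi_concave, of "1/2", OF _ _ A B] by simp
    thus "f t \<ge> 0" unfolding f_def eq by simp
  qed
  have "exp (\<phi> p) * dir_deriv \<phi> (v + w) p - (1/2) * (exp (\<phi> p) * dir_deriv \<phi> (2 *\<^sub>R v) p) - (1/2) * (exp (\<phi> p) * dir_deriv \<phi> (2 *\<^sub>R w) p) \<ge> 0"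
    by (rule deriv_nonneg_right[OF fd f0 fpos])
  hence "exp (\<phi> p) * (dir_deriv \<phi> (v + w) p - dir_deriv \<phi> v p - dir_deriv \<phi> w p) \<ge> 0"
    unfolding dd_scale[OF p v, of 2] dd_scale[OF p w, of 2] by (simp add: right_diff_distrib)
  moreover have "exp (\<phi> p) > 0" by simp
  ultimately have "dir_deriv \<phi> (v + w) p - dir_deriv \<phi> v p - dir_deriv \<phi> w p \<ge> 0"
    using pos_mult_nonneg by blast
  thus ?thesis by linarith
qed

end


lemma tangent_add: "v \<in> tangent_dirs \<Longrightarrow> w \<in> tangent_dirs \<Longrightarrow> v + w \<in> tangent_dirs"
  by (simp add: tangent_iff sum.distrib)
lemma tangent_scale: "v \<in> tangent_dirs \<Longrightarrow> c *\<^sub>R v \<in> tangent_dirs"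
  by (simp add: tangent_iff sum_distrib_left[symmetric])
lemma tangent_zero: "0 \<in> tangent_dirs"
  by (simp add: tangent_iff)
lemma tangent_diff_simplex: "p \<in> open_simplex \<Longrightarrow> q \<in> open_simplex \<Longrightarrow> q - p \<in> tangent_dirs"
  by (simp add: tangent_iff sum_subtractf simplex_sum)

definition unitv :: "'n::finite \<Rightarrow> real^'n" where
  "unitv i = (\<chi> j. if j = i then 1 else 0)"

lemma sum_unitv: "(\<Sum>j\<in>UNIV. (unitv i :: real^'n::finite)$j) = 1"
  unfolding unitv_def by simp

lemma tangent_unitv: "p \<in> open_simplex \<Longrightarrow> unitv i - p \<in> tangent_dirs"
  by (simp add: tangent_iff sum_subtractf simplex_sum sum_unitv)

lemma tangent_decomp:
  fixes v p :: "real^'n::finite"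
  assumes "(\<Sum>i\<in>UNIV. v$i) = 0" "(\<Sum>i\<in>UNIV. p$i) = 1"
  shows "(\<Sum>i\<in>UNIV. v$i *\<^sub>R (unitv i - p)) = v"
proof (rule vec_eq_iff[THEN iffD2], rule allI)
  fix j
  have "(\<Sum>i\<in>UNIV. v$i *\<^sub>R (unitv i - p))$j = (\<Sum>i\<in>UNIV. v$i * (if j = i then 1 else 0)) - (\<Sum>i\<in>UNIV. v$i) * p$j"
    by (simp add: unitv_def sum_subtractf algebra_simps sum_distrib_right sum_distrib_left)
  also have "\<dots> = v$j" using assms(1) by (simp add: if_distrib cong: if_cong)
  finally show "(\<Sum>i\<in>UNIV. v$i *\<^sub>R (unitv i - p))$j = v$j" .
qed

definition ww :: "(real^'n::finite \<Rightarrow> real) \<Rightarrow> real^'n \<Rightarrow> 'n \<Rightarrow> real" where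
  "ww \<phi> p i = 1 + dir_deriv \<phi> (unitv i - p) p"

context
  fixes \<phi> :: "real^'n::finite \<Rightarrow> real"
  assumes reg: "regular_exp_concave \<phi>"
begin

lemma dd_neg:
  assumes "p \<in> open_simplex" "v \<in> tangent_dirs"
  shows "dir_deriv \<phi> (- v) p = - dir_deriv \<phi> v p"
  using dd_scale[OF reg assms, of "-1"] by simp

lemma dd_add:
  assumes p: "p \<in> open_simplex" and v: "v \<in> tangent_dirs" and w: "w \<in> tangent_dirs"
  shows "dir_deriv \<phi> (v + w) p = dir_deriv \<phi> v p + dir_deriv \<phi> w p"
proof -
  have nv: "- v \<in> tangent_dirs" and nw: "- w \<in> tangent_dirs"
    using tangent_scale[OF v, of "-1"] tangent_scale[OF w, of "-1"] by simp_all
  have e: "- v + - w = - (v + w)" by simp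
  have "dir_deriv \<phi> (- (v + w)) p \<ge> - dir_deriv \<phi> v p - dir_deriv \<phi> w p"
    using dd_superadd[OF reg p nv nw] unfolding e dd_neg[OF p v] dd_neg[OF p w] by simp
  hence "- dir_deriv \<phi> (v + w) p \<ge> - dir_deriv \<phi> v p - dir_deriv \<phi> w p"
    unfolding dd_neg[OF p tangent_add[OF v w]] .
  thus ?thesis using dd_superadd[OF reg p v w] by linarith
qed

lemma dd_zero:
  assumes "p \<in> open_simplex"
  shows "dir_deriv \<phi> 0 p = 0"
  using dd_scale[OF reg assms tangent_zero, of 0] by simp

lemma dd_sum:
  assumes p: "p \<in> open_simplex" and F: "finite F" and u: "\<And>i. i \<in> F \<Longrightarrow> u i \<in> tangent_dirs"
  shows "dir_deriv \<phi> (\<Sum>i\<in>F. c i *\<^sub>R u i) p = (\<Sum>i\<in>F. c i * dir_deriv \<phi> (u i) p)"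
  using F u
proof (induction F rule: finite_induct)
  case empty
  then show ?case using dd_zero[OF p] by simp
next
  case (insert x F)
  have t1: "c x *\<^sub>R u x \<in> tangent_dirs" using insert tangent_scale by auto
  have t2: "(\<Sum>i\<in>F. c i *\<^sub>R u i) \<in> tangent_dirs"
    using insert(4) by (simp add: tangent_iff sum_distrib_left[symmetric] sum.swap[of _ F UNIV]) 
  show ?case using insert dd_add[OF p t1 t2] dd_scale[OF reg p, of "u x" "c x"] by simp
qed

lemma dd_expand:
  assumes p: "p \<in> open_simplex" and v: "v \<in> tangent_dirs"
  shows "dir_deriv \<phi> v p = (\<Sum>i\<in>UNIV. v$i * ww \<phi> p i)"
proof -
  have "dir_deriv \<phi> v p = dir_deriv \<phi> (\<Sum>i\<in>UNIV. v$i *\<^sub>R (unitv i - p)) p"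
    using tangent_decomp[of v p] v p by (simp add: tangent_iff simplex_sum)
  also have "\<dots> = (\<Sum>i\<in>UNIV. v$i * dir_deriv \<phi> (unitv i - p) p)"
    by (rule dd_sum[OF p]) (auto intro: tangent_unitv[OF p])
  also have "\<dots> = (\<Sum>i\<in>UNIV. v$i * ww \<phi> p i) - (\<Sum>i\<in>UNIV. v$i)"
    by (simp add: ww_def algebra_simps sum_subtractf sum.distrib)
  finally show ?thesis using v by (simp add: tangent_iff)
qed

lemma ww_sum:
  assumes p: "p \<in> open_simplex"
  shows "(\<Sum>i\<in>UNIV. p$i * ww \<phi> p i) = 1"
proof -
  have "(\<Sum>i\<in>UNIV. p$i *\<^sub>R (unitv i - p)) = 0"
  proof (rule vec_eq_iff[THEN iffD2], rule allI)
    fix j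
    have "(\<Sum>i\<in>UNIV. p$i *\<^sub>R (unitv i - p))$j = (\<Sum>i\<in>UNIV. p$i * (if j = i then 1 else 0)) - (\<Sum>i\<in>UNIV. p$i) * p$j"
      by (simp add: unitv_def sum_subtractf algebra_simps sum_distrib_right sum_distrib_left)
    also have "\<dots> = 0" using simplex_sum[OF p] by (simp add: if_distrib cong: if_cong)
    finally show "(\<Sum>i\<in>UNIV. p$i *\<^sub>R (unitv i - p))$j = (0::real^'n)$j" by simp
  qed
  hence "0 = (\<Sum>i\<in>UNIV. p$i * dir_deriv \<phi> (unitv i - p) p)"
    using dd_sum[OF p, of UNIV "\<lambda>i. unitv i - p" "\<lambda>i. p$i"] dd_zero[OF p] tangent_unitv[OF p] by simp
  thus ?thesis using simplex_sum[OF p] by (simp add: ww_def algebra_simps sum.distrib)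
qed

lemma one_plus_dd:
  assumes p: "p \<in> open_simplex" and q: "q \<in> open_simplex"
  shows "1 + dir_deriv \<phi> (q - p) p = (\<Sum>i\<in>UNIV. q$i * ww \<phi> p i)"
  using dd_expand[OF p tangent_diff_simplex[OF p q]] ww_sum[OF p]
  by (simp add: algebra_simps sum_subtractf)

lemma Phi_bound:
  assumes p: "p \<in> open_simplex" and q: "q \<in> open_simplex"
  shows "exp (\<phi> q) \<le> exp (\<phi> p) * (1 + dir_deriv \<phi> (q - p) p)"
proof -
  have v: "q - p \<in> tangent_dirs" by (rule tangent_diff_simplex[OF p q])
  define f where "f t = exp (\<phi> (p + t *\<^sub>R (q - p))) - exp (\<phi> p) - t * (exp (\<phi> q) - exp (\<phi> p))" for t
  have fd: "(f has_real_derivative exp (\<phi> p) * dir_deriv \<phi> (q - p) p - 1 * (exp (\<phi> q) - exp (\<phi> p))) (at 0)"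
  proof -
    have d2: "((\<lambda>t. t * (exp (\<phi> q) - exp (\<phi> p))) has_real_derivative 1 * (exp (\<phi> q) - exp (\<phi> p))) (at 0)"
      by (intro derivative_eq_intros) auto
    have "((\<lambda>t. exp (\<phi> (p + t *\<^sub>R (q - p))) - exp (\<phi> p) - t * (exp (\<phi> q) - exp (\<phi> p))) has_real_derivative
       exp (\<phi> p) * dir_deriv \<phi> (q - p) p - 0 - 1 * (exp (\<phi> q) - exp (\<phi> p))) (at 0)"
      by (rule DERIV_diff[OF DERIV_diff[OF exp_line_diff[OF reg p v] DERIV_const] d2])
    thus ?thesis unfolding f_def by simp
  qed
  have f0: "f 0 = 0" unfolding f_def by simp
  have fpos: "\<exists>d>0. \<forall>t. 0 < t \<and> t < d \<longrightarrow> f t \<ge> 0"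
  proof (intro exI[of _ 1] conjI allI impI)
    fix t :: real assume t: "0 < t \<and> t < 1"
    have "exp (\<phi> ((1 - t) *\<^sub>R p + t *\<^sub>R q)) \<ge> (1 - t) * exp (\<phi> p) + t * exp (\<phi> q)"
      using concave_onD[OF Phi_concave[OF reg], of t p q] t p q by simp
    moreover have "(1 - t) *\<^sub>R p + t *\<^sub>R q = p + t *\<^sub>R (q - p)" by (simp add: algebra_simps)
    ultimately show "f t \<ge> 0" unfolding f_def by (simp add: algebra_simps)
  qed simp
  have "exp (\<phi> p) * dir_deriv \<phi> (q - p) p - 1 * (exp (\<phi> q) - exp (\<phi> p)) \<ge> 0"
    by (rule deriv_nonneg_right[OF fd f0 fpos])
  thus ?thesis by (simp add: algebra_simps)
qed

lemma ww_pos: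
  assumes p: "p \<in> open_simplex" and q: "q \<in> open_simplex"
  shows "(\<Sum>i\<in>UNIV. q$i * ww \<phi> p i) > 0"
proof -
  have "exp (\<phi> p) * (1 + dir_deriv \<phi> (q - p) p) > 0"
    using Phi_bound[OF p q] exp_gt_zero[of "\<phi> q"] by linarith
  hence "1 + dir_deriv \<phi> (q - p) p > 0" by (simp add: zero_less_mult_iff)
  thus ?thesis using one_plus_dd[OF p q] by simp
qed

end


definition ctr :: "real^'n::finite" where "ctr = (\<chi> i. 1 / real CARD('n))"
definition sm :: "real^'n::finite \<Rightarrow> real" where "sm x = (\<Sum>i\<in>UNIV. x$i)"
definition posv :: "real^'n::finite \<Rightarrow> bool" where "posv x \<longleftrightarrow> (\<forall>i. 0 < x$i)"
definition nrm :: "real^'n::finite \<Rightarrow> real^'n" where "nrm x = (\<chi> i. x$i / sm x)"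
definition invv :: "real^'n::finite \<Rightarrow> real^'n" where "invv x = (\<chi> i. 1 / x$i)"
definition bet :: "(real^'n::finite \<Rightarrow> real) \<Rightarrow> real^'n \<Rightarrow> real^'n" where
  "bet \<phi> p = (\<chi> i. p$i * ww \<phi> p i)"
definition KK :: "(real^'n::finite \<Rightarrow> real) \<Rightarrow> real^'n \<Rightarrow> real" where
  "KK \<phi> x = \<phi> (nrm x) + ln (sm x)"
definition BB :: "(real^'n::finite \<Rightarrow> real) \<Rightarrow> real^'n \<Rightarrow> real^'n" where
  "BB \<phi> x = bet \<phi> (nrm x)"
definition al :: "(real^'n::finite \<Rightarrow> real) \<Rightarrow> real^'n" where
  "al \<phi> = bet \<phi> ctr"

lemma sm_pos: "posv x \<Longrightarrow> sm x > 0"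
  unfolding posv_def sm_def by (simp add: sum_pos)

lemma nrm_simplex: assumes "posv x" shows "nrm x \<in> open_simplex"
proof (rule simplex_memI)
  have s: "sm x > 0" using sm_pos assms .
  show "0 < nrm x $ i" for i using assms s unfolding posv_def nrm_def by simp
  show "(\<Sum>i\<in>UNIV. nrm x $ i) = 1" using s unfolding nrm_def
    by (simp add: sum_divide_distrib[symmetric] sm_def[symmetric])
qed

lemma card_pos_real: "real CARD('n::finite) > 0" by simp

lemma ctr_simplex: "(ctr :: real^'n::finite) \<in> open_simplex"
  by (rule simplex_memI) (simp_all add: ctr_def)

lemma posv_one: "posv (1::real^'n::finite)" unfolding posv_def by simp
lemma posv_mult: "posv x \<Longrightarrow> posv y \<Longrightarrow> posv (x * y)"
  unfolding posv_def by simp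
lemma posv_simplex: "p \<in> open_simplex \<Longrightarrow> posv p"
  unfolding posv_def using simplex_pos by blast

lemma sm_one: "sm (1::real^'n::finite) = real CARD('n)" unfolding sm_def by simp
lemma nrm_one: "nrm (1::real^'n::finite) = ctr" unfolding nrm_def ctr_def sm_one by simp
lemma nrm_simplex_id: assumes "p \<in> open_simplex" shows "nrm p = p"
  unfolding nrm_def sm_def using simplex_sum[OF assms] by (simp add: vec_eq_iff)

lemma perturb_const:
  fixes p h :: "real^'n::finite"
  assumes "\<And>i. p$i * h$i = c" "c \<noteq> 0"
  shows "perturb p h = ctr"
  unfolding perturb_def ctr_def using assms by (simp add: vec_eq_iff)

lemma perturb_prop:
  fixes p h :: "real^'n::finite"
  assumes "\<And>i. p$i * h$i = c * x$i" "c \<noteq> 0"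
  shows "perturb p h = (\<chi> i. x$i / sm x)"
  unfolding perturb_def sm_def using assms by (simp add: vec_eq_iff sum_distrib_left[symmetric])

context
  fixes \<phi> :: "real^'n::finite \<Rightarrow> real"
  assumes reg: "regular_exp_concave \<phi>"
begin

lemma log_div_eq:
  assumes p: "p \<in> open_simplex" and q: "q \<in> open_simplex"
  shows "log_div \<phi> q p = ln (\<Sum>i\<in>UNIV. q$i * ww \<phi> p i) - \<phi> q + \<phi> p"
  unfolding log_div_def using one_plus_dd[OF reg p q] by simp

lemma lemA:
  assumes inv: "\<forall>p\<in>open_simplex. \<forall>q\<in>open_simplex. \<forall>h\<in>open_simplex.
            log_div \<phi> (perturb q h) (perturb p h) = log_div \<phi> q p"
    and P: "posv P" and X: "posv X"
  shows "KK \<phi> (P * X) - KK \<phi> P - KK \<phi> X + KK \<phi> 1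
       = ln (\<Sum>i\<in>UNIV. BB \<phi> P $ i * X$i) - ln (\<Sum>i\<in>UNIV. al \<phi> $ i * X$i)"
proof -
  define n where "n = real CARD('n)"
  have n: "n > 0" unfolding n_def by simp
  define p where "p = nrm P"
  define q where "q = nrm (P * X)"
  define r where "r = nrm X"
  define h where "h = nrm (invv P)"
  define s1 where "s1 = sm P"
  define s2 where "s2 = sm (P * X)"
  define s3 where "s3 = sm X"
  define sh where "sh = sm (invv P)"
  have PX: "posv (P * X)" using P X by (rule posv_mult)
  have IP: "posv (invv P)" using P unfolding posv_def invv_def by simp
  have s1: "s1 > 0" "s2 > 0" "s3 > 0" "sh > 0" unfolding s1_def s2_def s3_def sh_def
    using sm_pos P X PX IP by auto
  have Pi: "P$i > 0" "X$i > 0" for i using P X unfolding posv_def by auto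
  have invc: "invv P $ i = 1 / P$i" for i by (simp add: invv_def)
  have ps: "p \<in> open_simplex" "q \<in> open_simplex" "r \<in> open_simplex" "h \<in> open_simplex"
    unfolding p_def q_def r_def h_def using nrm_simplex P X PX IP by auto
  have pe: "perturb p h = ctr"
  proof (rule perturb_const)
    fix i show "p$i * h$i = 1 / (s1 * sh)"
      unfolding p_def h_def nrm_def s1_def[symmetric] sh_def[symmetric]
      using Pi(1)[of i] s1 by (simp add: field_simps invc)
  qed (use s1 in simp)
  have qe: "perturb q h = r"
  proof -
    have "perturb q h = (\<chi> i. X$i / sm X)"
    proof (rule perturb_prop)
      fix i show "q$i * h$i = 1 / (s2 * sh) * X$i"
        unfolding q_def h_def nrm_def s2_def[symmetric] sh_def[symmetric]
        using Pi(1)[of i] s1 by (simp add: field_simps invc)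
    qed (use s1 in simp)
    thus ?thesis unfolding r_def nrm_def .
  qed
  have key: "log_div \<phi> r ctr = log_div \<phi> q p"
    using inv ps pe qe by metis
  define T1 where "T1 = (\<Sum>i\<in>UNIV. q$i * ww \<phi> p i)"
  define T2 where "T2 = (\<Sum>i\<in>UNIV. r$i * ww \<phi> ctr i)"
  have T: "T1 > 0" "T2 > 0" unfolding T1_def T2_def
    using ww_pos[OF reg] ps ctr_simplex by auto
  have key2: "ln T2 - \<phi> r + \<phi> ctr = ln T1 - \<phi> q + \<phi> p"
    using key log_div_eq[OF ctr_simplex ps(3)] log_div_eq[OF ps(1) ps(2)]
    unfolding T1_def T2_def by simp
  have B1: "(\<Sum>i\<in>UNIV. BB \<phi> P $ i * X$i) = (s2 / s1) * T1"
    unfolding T1_def sum_distrib_left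
  proof (rule sum.cong[OF refl])
    fix i show "BB \<phi> P $ i * X$i = s2 / s1 * (q$i * ww \<phi> p i)"
      unfolding BB_def bet_def p_def[symmetric] q_def nrm_def s2_def[symmetric]
      unfolding p_def nrm_def s1_def[symmetric] using s1 by (simp add: field_simps)
  qed
  have B2: "(\<Sum>i\<in>UNIV. al \<phi> $ i * X$i) = (s3 / n) * T2"
    unfolding T2_def sum_distrib_left
  proof (rule sum.cong[OF refl])
    fix i show "al \<phi> $ i * X$i = s3 / n * (r$i * ww \<phi> ctr i)"
      unfolding al_def bet_def r_def nrm_def s3_def[symmetric] ctr_def n_def[symmetric]
      using s1 n by (simp add: field_simps)
  qed
  have K: "KK \<phi> (P * X) = \<phi> q + ln s2" "KK \<phi> P = \<phi> p + ln s1" "KK \<phi> X = \<phi> r + ln s3"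
    "KK \<phi> 1 = \<phi> ctr + ln n"
    unfolding KK_def q_def s2_def p_def s1_def r_def s3_def n_def nrm_one sm_one by simp_all
  have L1: "ln ((s2 / s1) * T1) = ln s2 - ln s1 + ln T1"
    using s1 T by (simp add: ln_mult ln_div)
  have L2: "ln ((s3 / n) * T2) = ln s3 - ln n + ln T2"
    using s1 T n by (simp add: ln_mult ln_div)
  show ?thesis unfolding B1 B2 L1 L2 K using key2 by simp
qed

end


definition Ej :: "'n::finite \<Rightarrow> real^'n" where
  "Ej j = (\<chi> k. if k = j then 2 else 1)"
definition MM :: "(real^'n::finite \<Rightarrow> real) \<Rightarrow> 'n \<Rightarrow> 'n \<Rightarrow> real" where
  "MM \<phi> j k = (1 + al \<phi> $ j) * BB \<phi> (Ej j) $ k - al \<phi> $ k"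
definition xS :: "'n::finite set \<Rightarrow> real \<Rightarrow> real^'n" where
  "xS S X = (\<chi> k. if k \<in> S then X else 1)"

definition alS :: "(real^'n::finite \<Rightarrow> real) \<Rightarrow> 'n set \<Rightarrow> real" where
  "alS \<phi> S = (\<Sum>i\<in>S. al \<phi> $ i)"
definition AS :: "(real^'n::finite \<Rightarrow> real) \<Rightarrow> 'n set \<Rightarrow> real" where
  "AS \<phi> S = (\<Sum>j\<in>S. \<Sum>k\<in>S. MM \<phi> j k)"
definition bS :: "(real^'n::finite \<Rightarrow> real) \<Rightarrow> 'n set \<Rightarrow> real \<Rightarrow> real" where
  "bS \<phi> S X = (\<Sum>j\<in>S. BB \<phi> (xS S X) $ j)"

lemma posv_Ej: "posv (Ej j)" unfolding posv_def Ej_def by simp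
lemma posv_xS: "X > 0 \<Longrightarrow> posv (xS S X)" unfolding posv_def xS_def by simp
lemma xS_mult: "xS S X * xS S Y = xS S (X * Y)" unfolding xS_def by (simp add: vec_eq_iff)
lemma xS_one: "xS S 1 = 1" unfolding xS_def by (simp add: vec_eq_iff)

lemma sum_Ej: "(\<Sum>i\<in>UNIV. f i * Ej j $ i) = (\<Sum>i\<in>UNIV. f i) + f j"
proof -
  have "(\<Sum>i\<in>UNIV. f i * Ej j $ i) = (\<Sum>i\<in>UNIV. f i + (if i = j then f i else 0))"
    unfolding Ej_def by (rule sum.cong) auto
  also have "\<dots> = (\<Sum>i\<in>UNIV. f i) + f j" by (simp add: sum.distrib)
  finally show ?thesis .
qed

lemma sum_xS: "(\<Sum>i\<in>UNIV. f i * xS S X $ i) = (\<Sum>i\<in>UNIV. f i) + (X - 1) * (\<Sum>i\<in>S. f i)"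
proof -
  have "(\<Sum>i\<in>UNIV. f i * xS S X $ i) = (\<Sum>i\<in>UNIV. f i + (X - 1) * (if i \<in> S then f i else 0))"
    unfolding xS_def by (rule sum.cong) (auto simp: algebra_simps)
  also have "\<dots> = (\<Sum>i\<in>UNIV. f i) + (X - 1) * (\<Sum>i\<in>S. f i)"
    by (simp add: sum.distrib sum_distrib_left[symmetric] sum.If_cases)
  finally show ?thesis .
qed

context
  fixes \<phi> :: "real^'n::finite \<Rightarrow> real"
  assumes reg: "regular_exp_concave \<phi>"
begin

lemma bet_sum: "p \<in> open_simplex \<Longrightarrow> (\<Sum>i\<in>UNIV. bet \<phi> p $ i) = 1"
  unfolding bet_def using ww_sum[OF reg] by simp

lemma BB_sum: "posv x \<Longrightarrow> (\<Sum>i\<in>UNIV. BB \<phi> x $ i) = 1"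
  unfolding BB_def using bet_sum nrm_simplex by blast

lemma al_sum: "(\<Sum>i\<in>UNIV. al \<phi> $ i) = 1"
  unfolding al_def using bet_sum ctr_simplex by blast

lemma bet_pos:
  assumes p: "p \<in> open_simplex" and X: "posv X"
  shows "(\<Sum>i\<in>UNIV. bet \<phi> p $ i * X$i) > 0"
proof -
  have pX: "posv (p * X)" using posv_mult[OF posv_simplex[OF p] X] .
  define q where "q = nrm (p * X)"
  define s where "s = sm (p * X)"
  have q: "q \<in> open_simplex" unfolding q_def using nrm_simplex[OF pX] .
  have s: "s > 0" unfolding s_def using sm_pos[OF pX] .
  have "(\<Sum>i\<in>UNIV. bet \<phi> p $ i * X$i) = s * (\<Sum>i\<in>UNIV. q$i * ww \<phi> p i)"
    unfolding sum_distrib_left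
    by (rule sum.cong[OF refl]) (use s in \<open>simp add: bet_def q_def nrm_def s_def[symmetric]\<close>)
  thus ?thesis using ww_pos[OF reg p q] s by simp
qed

lemma BB_pos: "posv P \<Longrightarrow> posv X \<Longrightarrow> (\<Sum>i\<in>UNIV. BB \<phi> P $ i * X$i) > 0"
  unfolding BB_def using bet_pos nrm_simplex by blast

lemma al_pos: "posv X \<Longrightarrow> (\<Sum>i\<in>UNIV. al \<phi> $ i * X$i) > 0"
  unfolding al_def using bet_pos ctr_simplex by blast

context
  assumes inv: "\<forall>p\<in>open_simplex. \<forall>q\<in>open_simplex. \<forall>h\<in>open_simplex.
            log_div \<phi> (perturb q h) (perturb p h) = log_div \<phi> q p"
begin

lemma S_lem:
  assumes P: "posv P" and X: "posv X"
  shows "(\<Sum>i\<in>UNIV. BB \<phi> P $ i * X$i) * (\<Sum>i\<in>UNIV. al \<phi> $ i * P$i)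
       = (\<Sum>i\<in>UNIV. BB \<phi> X $ i * P$i) * (\<Sum>i\<in>UNIV. al \<phi> $ i * X$i)"
proof -
  define a where "a = (\<Sum>i\<in>UNIV. BB \<phi> P $ i * X$i)"
  define b where "b = (\<Sum>i\<in>UNIV. al \<phi> $ i * X$i)"
  define c where "c = (\<Sum>i\<in>UNIV. BB \<phi> X $ i * P$i)"
  define d where "d = (\<Sum>i\<in>UNIV. al \<phi> $ i * P$i)"
  have pos: "a > 0" "b > 0" "c > 0" "d > 0" unfolding a_def b_def c_def d_def
    using BB_pos al_pos P X by auto
  have "ln a - ln b = ln c - ln d"
    using lemA[OF reg inv P X] lemA[OF reg inv X P] unfolding a_def b_def c_def d_def
    by (simp add: mult.commute)
  hence "ln (a * d) = ln (c * b)" using pos by (simp add: ln_mult)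
  hence "a * d = c * b" using pos by simp
  thus ?thesis unfolding a_def b_def c_def d_def .
qed

lemma Mrep:
  assumes X: "posv X"
  shows "BB \<phi> X $ j * (\<Sum>i\<in>UNIV. al \<phi> $ i * X$i) = (\<Sum>k\<in>UNIV. MM \<phi> j k * X$k)"
proof -
  have "(\<Sum>i\<in>UNIV. BB \<phi> (Ej j) $ i * X$i) * (1 + al \<phi> $ j)
       = (1 + BB \<phi> X $ j) * (\<Sum>i\<in>UNIV. al \<phi> $ i * X$i)"
    using S_lem[OF posv_Ej X, of j] unfolding sum_Ej al_sum BB_sum[OF X] .
  hence "BB \<phi> X $ j * (\<Sum>i\<in>UNIV. al \<phi> $ i * X$i)
       = (1 + al \<phi> $ j) * (\<Sum>i\<in>UNIV. BB \<phi> (Ej j) $ i * X$i) - (\<Sum>i\<in>UNIV. al \<phi> $ i * X$i)"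
    by (simp add: algebra_simps)
  also have "\<dots> = (\<Sum>k\<in>UNIV. MM \<phi> j k * X$k)"
    unfolding MM_def by (simp add: sum_distrib_left sum_subtractf algebra_simps)
  finally show ?thesis .
qed

lemma MM_rowsum: "(\<Sum>k\<in>UNIV. MM \<phi> j k) = al \<phi> $ j"
  unfolding MM_def using BB_sum[OF posv_Ej] al_sum
  by (simp add: sum_subtractf sum_distrib_left[symmetric])

lemma MM_sym: "MM \<phi> j k = MM \<phi> k j"
proof -
  have "(\<Sum>i\<in>UNIV. BB \<phi> (Ej k) $ i * Ej j $ i) * (\<Sum>i\<in>UNIV. al \<phi> $ i * Ej k $ i)
       = (\<Sum>i\<in>UNIV. BB \<phi> (Ej j) $ i * Ej k $ i) * (\<Sum>i\<in>UNIV. al \<phi> $ i * Ej j $ i)"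
    by (rule S_lem[OF posv_Ej posv_Ej])
  hence "(1 + BB \<phi> (Ej k) $ j) * (1 + al \<phi> $ k) = (1 + BB \<phi> (Ej j) $ k) * (1 + al \<phi> $ j)"
    unfolding sum_Ej al_sum BB_sum[OF posv_Ej] .
  thus ?thesis unfolding MM_def by (simp add: algebra_simps)
qed


lemma d_xS: "(\<Sum>i\<in>UNIV. al \<phi> $ i * xS S X $ i) = 1 + (X - 1) * alS \<phi> S"
  unfolding sum_xS al_sum alS_def ..

lemma bS_eq:
  assumes "X > 0"
  shows "bS \<phi> S X * (1 + (X - 1) * alS \<phi> S) = alS \<phi> S + (X - 1) * AS \<phi> S"
proof -
  have "bS \<phi> S X * (1 + (X - 1) * alS \<phi> S) = (\<Sum>j\<in>S. BB \<phi> (xS S X) $ j * (\<Sum>i\<in>UNIV. al \<phi> $ i * xS S X $ i))"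
    unfolding bS_def d_xS by (simp add: sum_distrib_right)
  also have "\<dots> = (\<Sum>j\<in>S. \<Sum>k\<in>UNIV. MM \<phi> j k * xS S X $ k)"
    using Mrep[OF posv_xS[OF assms]] by simp
  also have "\<dots> = (\<Sum>j\<in>S. al \<phi> $ j + (X - 1) * (\<Sum>k\<in>S. MM \<phi> j k))"
    unfolding sum_xS[where f="\<lambda>k. MM \<phi> _ k"] MM_rowsum ..
  also have "\<dots> = alS \<phi> S + (X - 1) * AS \<phi> S"
    unfolding alS_def AS_def by (simp add: sum.distrib sum_distrib_left)
  finally show ?thesis .
qed

lemma F_lem:
  assumes X: "X > 0" and Y: "Y > 0"
  shows "KK \<phi> (xS S (X * Y)) - KK \<phi> (xS S X) - KK \<phi> (xS S Y) + KK \<phi> 1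
       = ln (1 + (Y - 1) * bS \<phi> S X) - ln (1 + (Y - 1) * alS \<phi> S)"
proof -
  have "(\<Sum>i\<in>UNIV. BB \<phi> (xS S X) $ i * xS S Y $ i) = 1 + (Y - 1) * bS \<phi> S X"
    unfolding sum_xS BB_sum[OF posv_xS[OF X]] bS_def ..
  thus ?thesis using lemA[OF reg inv posv_xS[OF X, of S] posv_xS[OF Y, of S]] unfolding xS_mult d_xS
    by simp
qed

lemma poly_lem:
  assumes "S \<noteq> {}"
  shows "(AS \<phi> S - alS \<phi> S) * (AS \<phi> S - alS \<phi> S ^ 2) = 0"
proof -
  define a where "a = alS \<phi> S"
  define A where "A = AS \<phi> S"
  have dpos: "1 + (Y - 1) * a > 0" if "Y > 0" for Y
    using al_pos[OF posv_xS[OF that]] unfolding d_xS a_def .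
  have npos: "1 + (Y - 1) * bS \<phi> S X > 0" if "X > 0" "Y > 0" for X Y
  proof -
    have "(\<Sum>i\<in>UNIV. BB \<phi> (xS S X) $ i * xS S Y $ i) = 1 + (Y - 1) * bS \<phi> S X"
      unfolding sum_xS BB_sum[OF posv_xS[OF that(1)]] bS_def ..
    thus ?thesis using BB_pos[OF posv_xS posv_xS] that by metis
  qed
  have b: "bS \<phi> S X = (a + (X - 1) * A) / (1 + (X - 1) * a)" if "X > 0" for X
    using bS_eq[OF that, of S] dpos[OF that] unfolding a_def A_def by (simp add: field_simps)
  have e1: "KK \<phi> (xS S 4) - KK \<phi> (xS S 2) - KK \<phi> (xS S 2) + KK \<phi> 1 = ln (1 + (2 - 1) * bS \<phi> S 2) - ln (1 + (2 - 1) * a)"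
    using F_lem[of 2 2 S] unfolding a_def by simp
  have e2: "KK \<phi> (xS S 12) - KK \<phi> (xS S 4) - KK \<phi> (xS S 3) + KK \<phi> 1 = ln (1 + (3 - 1) * bS \<phi> S 4) - ln (1 + (3 - 1) * a)"
    using F_lem[of 4 3 S] unfolding a_def by simp
  have e3: "KK \<phi> (xS S 6) - KK \<phi> (xS S 2) - KK \<phi> (xS S 3) + KK \<phi> 1 = ln (1 + (3 - 1) * bS \<phi> S 2) - ln (1 + (3 - 1) * a)"
    using F_lem[of 2 3 S] unfolding a_def by simp
  have e4: "KK \<phi> (xS S 12) - KK \<phi> (xS S 2) - KK \<phi> (xS S 6) + KK \<phi> 1 = ln (1 + (6 - 1) * bS \<phi> S 2) - ln (1 + (6 - 1) * a)"
    using F_lem[of 2 6 S] unfolding a_def by simp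
  define b2 where "b2 = bS \<phi> S 2"
  define b4 where "b4 = bS \<phi> S 4"
  have p1: "1 + b2 > 0" "1 + 2 * b4 > 0" "1 + 2 * b2 > 0" "1 + 5 * b2 > 0"
    using npos[of 2 2] npos[of 4 3] npos[of 2 3] npos[of 2 6] unfolding b2_def b4_def by simp_all
  have p2: "1 + a > 0" "1 + 2 * a > 0" "1 + 5 * a > 0" "1 + 3 * a > 0"
    using dpos[of 2] dpos[of 3] dpos[of 6] dpos[of 4] by simp_all
  have "ln (1 + b2) - ln (1 + a) + ln (1 + 2 * b4) = ln (1 + 2 * b2) + ln (1 + 5 * b2) - ln (1 + 5 * a)"
    using e1 e2 e3 e4 unfolding b2_def b4_def by simp
  hence "ln ((1 + b2) * (1 + 2 * b4) * (1 + 5 * a)) = ln ((1 + 2 * b2) * (1 + 5 * b2) * (1 + a))"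
    using p1 p2 by (simp add: ln_mult)
  hence eq: "(1 + b2) * (1 + 2 * b4) * (1 + 5 * a) = (1 + 2 * b2) * (1 + 5 * b2) * (1 + a)"
    using p1 p2 by (subst (asm) ln_inj_iff) (auto intro!: mult_pos_pos)
  have b2e: "b2 = (a + A) / (1 + a)" unfolding b2_def using b[of 2] by simp
  have b4e: "b4 = (a + 3 * A) / (1 + 3 * a)" unfolding b4_def using b[of 4] by simp
  have "((1 + a) + (a + A)) * ((1 + 3 * a) + 2 * (a + 3 * A)) * (1 + 5 * a)
      = ((1 + a) + 2 * (a + A)) * ((1 + a) + 5 * (a + A)) * (1 + 3 * a)"
  proof -
    have f1: "(1 + b2) * (1 + a) = (1 + a) + (a + A)" using p2 unfolding b2e by (simp add: field_simps)
    have f2: "(1 + 2 * b4) * (1 + 3 * a) = (1 + 3 * a) + 2 * (a + 3 * A)" using p2 unfolding b4e by (simp add: field_simps)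
    have f3: "(1 + 2 * b2) * (1 + a) = (1 + a) + 2 * (a + A)" using p2 unfolding b2e by (simp add: field_simps)
    have f4: "(1 + 5 * b2) * (1 + a) = (1 + a) + 5 * (a + A)" using p2 unfolding b2e by (simp add: field_simps)
    have "((1 + b2) * (1 + a)) * ((1 + 2 * b4) * (1 + 3 * a)) * (1 + 5 * a)
        = ((1 + b2) * (1 + 2 * b4) * (1 + 5 * a)) * ((1 + a) * (1 + 3 * a))" by (simp add: algebra_simps)
    also have "\<dots> = ((1 + 2 * b2) * (1 + 5 * b2) * (1 + a)) * ((1 + a) * (1 + 3 * a))" using eq by simp
    also have "\<dots> = ((1 + 2 * b2) * (1 + a)) * ((1 + 5 * b2) * (1 + a)) * (1 + 3 * a)" by (simp add: algebra_simps)
    finally show ?thesis unfolding f1 f2 f3 f4 .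
  qed
  hence "-4 * ((A - a) * (A - a ^ 2)) = 0" by (simp add: algebra_simps power2_eq_square)
  thus ?thesis unfolding a_def A_def by simp
qed

end
end


lemma Rderiv:
  fixes n s al A :: real assumes n: "n > 0"
  shows "((\<lambda>t. (n - s) * ((al * (1/n - t * s) + t * n * A) / ((1/n - t * s) + t * n * al)) / (1/n + t * (n - s))
             - s * (1 - (al * (1/n - t * s) + t * n * A) / ((1/n - t * s) + t * n * al)) / (1/n - t * s))
    has_real_derivative (n^4 * (A-al) - (n * (n * al - s))^2)) (at 0)"
  using n
  apply -
  apply (rule derivative_eq_intros refl | simp)+
  apply (simp add: field_simps power2_eq_square eval_nat_numeral)
  done

lemma card_compl_real: "real (card (- (S::'n::finite set))) = real CARD('n) - real (card S)"
proof -
  have "card (- S) = card (UNIV - S)" by (simp add: Compl_eq_Diff_UNIV)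
  also have "\<dots> = CARD('n) - card S" by (rule card_Diff_subset) auto
  finally show ?thesis by (simp add: of_nat_diff card_mono)
qed

lemma BB_nrm: "nrm x = p \<Longrightarrow> BB \<phi> x = bet \<phi> p"
  unfolding BB_def by simp

context
  fixes \<phi> :: "real^'n::finite \<Rightarrow> real"
  assumes reg: "regular_exp_concave \<phi>"
  and inv: "\<forall>p\<in>open_simplex. \<forall>q\<in>open_simplex. \<forall>h\<in>open_simplex.
            log_div \<phi> (perturb q h) (perturb p h) = log_div \<phi> q p"
begin

lemma AS_lt:
  assumes S1: "S \<noteq> {}" and S2: "S \<noteq> UNIV"
  shows "AS \<phi> S < alS \<phi> S"
proof -
  define n where "n = real CARD('n)"
  define s where "s = real (card S)"
  have n: "n > 0" unfolding n_def by simp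
  have s: "0 < s" "s < n" unfolding s_def n_def
    using S1 S2 by (auto simp: card_gt_0_iff intro!: psubset_card_mono)
  obtain i0 where i0: "i0 \<in> S" using S1 by blast
  obtain j0 where j0: "j0 \<notin> S" using S2 by blast
  define v :: "real^'n" where "v = (\<chi> i. (if i \<in> S then n else 0) - s)"
  have vsum: "(\<Sum>i\<in>UNIV. v$i) = 0"
    unfolding v_def by (simp add: sum_subtractf sum.If_cases s_def n_def)
  have vt: "v \<in> tangent_dirs" using vsum by (simp add: tangent_iff)
  have v0: "v \<noteq> 0"
  proof
    assume "v = 0" hence "v $ i0 = 0" by simp
    thus False using i0 s unfolding v_def by simp
  qed
  define alpha where "alpha = alS \<phi> S"
  define A where "A = AS \<phi> S"
  define a where "a t = 1/n + t * (n - s)" for t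
  define c where "c t = 1/n - t * s" for t
  define R where "R t = (n - s) * ((alpha * (1/n - t * s) + t * n * A) / ((1/n - t * s) + t * n * alpha)) / (1/n + t * (n - s))
             - s * (1 - (alpha * (1/n - t * s) + t * n * A) / ((1/n - t * s) + t * n * alpha)) / (1/n - t * s)" for t
  define g where "g t = exp (\<phi> (ctr + t *\<^sub>R v))" for t
  have pt: "(ctr + t *\<^sub>R v)$i = (if i \<in> S then a t else c t)" for t i
    unfolding v_def a_def c_def ctr_def n_def by (simp add: algebra_simps)
  have key: "dir_deriv \<phi> v (ctr + t *\<^sub>R v) = R t" if pS: "ctr + t *\<^sub>R v \<in> open_simplex" for t
  proof -
    define p where "p = ctr + t *\<^sub>R v"
    have p: "p \<in> open_simplex" using pS unfolding p_def .
    have pi: "p$i = (if i \<in> S then a t else c t)" for i unfolding p_def by (rule pt)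
    have at: "a t > 0" using simplex_pos[OF p, of i0] pi[of i0] i0 by simp
    have ct: "c t > 0" using simplex_pos[OF p, of j0] pi[of j0] j0 by simp
    have psum: "s * a t + (n - s) * c t = 1"
    proof -
      have "(\<Sum>i\<in>UNIV. p$i) = 1" by (rule simplex_sum[OF p])
      hence "(\<Sum>i\<in>UNIV. (if i \<in> S then a t else c t)) = 1" unfolding pi .
      thus ?thesis by (simp add: sum.If_cases s_def n_def card_compl_real algebra_simps)
    qed
    define X where "X = a t / c t"
    have X: "X > 0" unfolding X_def using at ct by simp
    have nx: "nrm (xS S X) = p"
    proof -
      have "sm (xS S X) = s * X + (n - s)"
        unfolding sm_def xS_def by (simp add: sum.If_cases s_def n_def card_compl_real)
      also have "\<dots> = 1 / c t" unfolding X_def using ct psum by (simp add: field_simps)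
      finally have "sm (xS S X) = 1 / c t" .
      thus ?thesis unfolding nrm_def using pi ct unfolding X_def xS_def by (simp add: vec_eq_iff)
    qed
    define BS where "BS = (\<Sum>j\<in>S. bet \<phi> p $ j)"
    have bS: "bS \<phi> S X = BS" unfolding bS_def BS_def BB_nrm[OF nx] ..
    have dpos: "1 + (X - 1) * alpha > 0"
      using al_pos[OF reg posv_xS[OF X, of S]] unfolding d_xS[OF reg inv, of S X] alpha_def .
    have beq: "BS * (1 + (X - 1) * alpha) = alpha + (X - 1) * A"
      using bS_eq[OF reg inv X, of S] unfolding bS alpha_def A_def .
    have amc: "a t - c t = t * n" unfolding a_def c_def by (simp add: algebra_simps)
    have X1: "X - 1 = t * n / c t" unfolding X_def using ct amc by (simp add: field_simps)
    have den: "c t + t * n * alpha > 0"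
    proof -
      have "c t * (1 + (X - 1) * alpha) > 0" using ct dpos by simp
      moreover have "c t * (1 + (X - 1) * alpha) = c t + t * n * alpha" unfolding X1 using ct by (simp add: field_simps)
      ultimately show ?thesis by simp
    qed
    have BSe: "BS = (alpha * c t + t * n * A) / (c t + t * n * alpha)"
    proof -
      have "c t * (BS * (1 + (X - 1) * alpha)) = c t * (alpha + (X - 1) * A)" using beq by simp
      hence "c t * (BS * (c t + t * n * alpha)) = c t * (alpha * c t + t * n * A)" unfolding X1 using ct by (simp add: field_simps)
      hence "BS * (c t + t * n * alpha) = alpha * c t + t * n * A" using ct by simp
      thus ?thesis using den by (simp add: field_simps)
    qed
    have wwe: "ww \<phi> p i = bet \<phi> p $ i / p$i" for i
      using simplex_pos[OF p, of i] unfolding bet_def by simp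
    have "dir_deriv \<phi> v p = (\<Sum>i\<in>UNIV. v$i * ww \<phi> p i)" by (rule dd_expand[OF reg p vt])
    also have "\<dots> = (\<Sum>i\<in>UNIV. if i \<in> S then (n - s) / a t * bet \<phi> p $ i else (- s) / c t * bet \<phi> p $ i)"
      by (rule sum.cong[OF refl]) (simp add: v_def wwe pi)
    also have "\<dots> = (n - s) / a t * BS + (- s) / c t * (\<Sum>i\<in>-S. bet \<phi> p $ i)"
      by (simp add: sum.If_cases sum_distrib_left BS_def)
    also have "(\<Sum>i\<in>-S. bet \<phi> p $ i) = 1 - BS"
    proof -
      have "(\<Sum>i\<in>UNIV. bet \<phi> p $ i) = (\<Sum>i\<in>S. bet \<phi> p $ i) + (\<Sum>i\<in>-S. bet \<phi> p $ i)"
        by (metis Compl_eq_Diff_UNIV add.commute finite subset_UNIV sum.subset_diff)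
      thus ?thesis using bet_sum[OF reg p] unfolding BS_def by simp
    qed
    also have "(n - s) / a t * BS + (- s) / c t * (1 - BS) = R t"
      unfolding R_def BSe a_def[symmetric] c_def[symmetric] using at ct den by (simp add: field_simps)
    finally show ?thesis unfolding p_def .
  qed
  have gd: "(g has_real_derivative g t * R t) (at t)" if pS: "ctr + t *\<^sub>R v \<in> open_simplex" for t
  proof -
    have "((\<lambda>t. \<phi> (ctr + t *\<^sub>R v)) has_real_derivative dir_deriv \<phi> v (ctr + t *\<^sub>R v)) (at t)"
      by (rule line_diff_at[OF reg ctr_simplex vt pS])
    from DERIV_chain2[OF DERIV_exp this] show ?thesis
      unfolding g_def key[OF pS] by simp
  qed
  have ev: "eventually (\<lambda>t. ctr + t *\<^sub>R v \<in> open_simplex) (nhds 0)"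
    by (rule eventually_in_simplex[OF ctr_simplex vt])
  have ev2: "eventually (\<lambda>t. deriv g t = g t * R t) (nhds 0)"
    using ev by (rule eventually_mono) (use gd DERIV_imp_deriv in blast)
  have dd: "deriv (deriv g) 0 = deriv (\<lambda>t. g t * R t) 0"
    by (rule deriv_cong_ev[OF ev2 refl])
  have p0: "ctr + 0 *\<^sub>R v \<in> open_simplex" using ctr_simplex by simp
  have Rd: "(R has_real_derivative (n^4 * (A-alpha) - (n * (n * alpha - s))^2)) (at 0)"
    unfolding R_def[abs_def] by (rule Rderiv[OF n])
  have R0: "R 0 = n * (n * alpha - s)"
    unfolding R_def using n by (simp add: field_simps)
  have "((\<lambda>t. g t * R t) has_real_derivative g 0 * R 0 * R 0 + (n^4 * (A-alpha) - (n * (n * alpha - s))^2) * g 0) (at 0)"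
    using DERIV_mult[OF gd[OF p0] Rd] by simp
  hence "deriv (deriv g) 0 = g 0 * R 0 * R 0 + (n^4 * (A-alpha) - (n * (n * alpha - s))^2) * g 0"
    unfolding dd by (rule DERIV_imp_deriv)
  also have "\<dots> = g 0 * n^4 * (A - alpha)" unfolding R0 by (simp add: algebra_simps power2_eq_square)
  finally have eq: "deriv (deriv g) 0 = g 0 * n^4 * (A - alpha)" .
  have "deriv (deriv g) 0 < 0"
    using reg ctr_simplex v0 vsum unfolding regular_exp_concave_def g_def[abs_def] by blast
  hence "g 0 * n^4 * (A - alpha) < 0" unfolding eq .
  moreover have "g 0 > 0" unfolding g_def by simp
  ultimately have "A - alpha < 0" using n by (simp add: mult_less_0_iff)
  thus ?thesis unfolding A_def alpha_def by simp
qed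

end


context
  fixes \<phi> :: "real^'n::finite \<Rightarrow> real"
  assumes reg: "regular_exp_concave \<phi>"
  and inv: "\<forall>p\<in>open_simplex. \<forall>q\<in>open_simplex. \<forall>h\<in>open_simplex.
            log_div \<phi> (perturb q h) (perturb p h) = log_div \<phi> q p"
  and card2: "CARD('n) \<ge> 2"
begin

lemma AS_sq: assumes S: "S \<noteq> {}" shows "AS \<phi> S = (alS \<phi> S)^2"
proof (cases "S = UNIV")
  case True
  have "AS \<phi> S = (\<Sum>j\<in>UNIV. \<Sum>k\<in>UNIV. MM \<phi> j k)" using True by (simp add: AS_def)
  also have "\<dots> = (\<Sum>j\<in>UNIV. al \<phi> $ j)" using MM_rowsum[OF reg inv] by simp
  also have "\<dots> = 1" using al_sum[OF reg] .
  finally have "AS \<phi> S = 1" .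
  moreover have "alS \<phi> S = 1" using True al_sum[OF reg] by (simp add: alS_def)
  ultimately show ?thesis by simp
next
  case False
  have "(AS \<phi> S - alS \<phi> S) * (AS \<phi> S - alS \<phi> S ^ 2) = 0" by (rule poly_lem[OF reg inv S])
  moreover have "AS \<phi> S < alS \<phi> S" by (rule AS_lt[OF reg inv S False])
  ultimately show ?thesis by simp
qed

lemma single_ne_UNIV: "{i} \<noteq> (UNIV :: 'n set)"
proof
  assume "{i} = (UNIV :: 'n set)"
  hence "CARD('n) = 1" by (metis card.empty card.insert empty_iff finite.emptyI One_nat_def)
  thus False using card2 by simp
qed

lemma MM_diag: "MM \<phi> i i = (al \<phi> $ i)^2"
  using AS_sq[of "{i}"] by (simp add: AS_def alS_def)

lemma al_bounds: "0 < al \<phi> $ i" "al \<phi> $ i < 1"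
proof -
  have "AS \<phi> {i} < alS \<phi> {i}" by (rule AS_lt[OF reg inv _ single_ne_UNIV]) simp
  hence "(al \<phi> $ i)^2 < al \<phi> $ i" using MM_diag[of i] by (simp add: AS_def alS_def)
  thus "0 < al \<phi> $ i" "al \<phi> $ i < 1"
    by (auto simp: power2_eq_square) (smt (verit) mult_le_cancel_left1 mult_nonneg_nonneg)+
qed

lemma MM_off: assumes ij: "i \<noteq> j" shows "MM \<phi> i j = al \<phi> $ i * al \<phi> $ j"
proof -
  have "AS \<phi> {i, j} = (alS \<phi> {i, j})^2" by (rule AS_sq) simp
  hence "MM \<phi> i i + MM \<phi> i j + (MM \<phi> j i + MM \<phi> j j) = (al \<phi> $ i + al \<phi> $ j)^2"
    using ij by (simp add: AS_def alS_def)
  hence "MM \<phi> i j + MM \<phi> j i = 2 * (al \<phi> $ i * al \<phi> $ j)"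
    unfolding MM_diag by (simp add: power2_eq_square algebra_simps)
  thus ?thesis using MM_sym[OF reg inv, of i j] by simp
qed

lemma MM_all: "MM \<phi> j k = al \<phi> $ j * al \<phi> $ k"
  by (cases "j = k") (simp_all add: MM_diag MM_off power2_eq_square)

lemma BB_Ej: "BB \<phi> (Ej j) $ k = al \<phi> $ k"
proof -
  have "(1 + al \<phi> $ j) * BB \<phi> (Ej j) $ k - al \<phi> $ k = al \<phi> $ j * al \<phi> $ k"
    using MM_all[of j k] unfolding MM_def .
  hence "(1 + al \<phi> $ j) * BB \<phi> (Ej j) $ k = (1 + al \<phi> $ j) * al \<phi> $ k" by (simp add: algebra_simps)
  moreover have "1 + al \<phi> $ j \<noteq> 0" using al_bounds(1)[of j] by simp
  ultimately show ?thesis by simp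
qed

lemma BB_const: assumes P: "posv P" shows "BB \<phi> P $ j = al \<phi> $ j"
proof -
  have "(\<Sum>i\<in>UNIV. BB \<phi> P $ i * Ej j $ i) * (\<Sum>i\<in>UNIV. al \<phi> $ i * P$i)
       = (\<Sum>i\<in>UNIV. BB \<phi> (Ej j) $ i * P$i) * (\<Sum>i\<in>UNIV. al \<phi> $ i * Ej j $ i)"
    by (rule S_lem[OF reg inv P posv_Ej])
  hence "(1 + BB \<phi> P $ j) * (\<Sum>i\<in>UNIV. al \<phi> $ i * P$i) = (\<Sum>i\<in>UNIV. al \<phi> $ i * P$i) * (1 + al \<phi> $ j)"
    unfolding sum_Ej BB_sum[OF reg P] al_sum[OF reg] BB_Ej .
  moreover have "(\<Sum>i\<in>UNIV. al \<phi> $ i * P$i) > 0" by (rule al_pos[OF reg P])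
  ultimately show ?thesis by simp
qed

lemma ww_const: assumes p: "p \<in> open_simplex" shows "ww \<phi> p i = al \<phi> $ i / p$i"
proof -
  have "bet \<phi> p $ i = al \<phi> $ i"
    using BB_const[OF posv_simplex[OF p], of i] BB_nrm[OF nrm_simplex_id[OF p]] by simp
  thus ?thesis using simplex_pos[OF p, of i] unfolding bet_def by (simp add: field_simps)
qed

lemma phi_form:
  assumes p: "p \<in> open_simplex"
  shows "\<phi> p = (\<Sum>i\<in>UNIV. al \<phi> $ i * ln (p$i)) + (\<phi> ctr - (\<Sum>i\<in>UNIV. al \<phi> $ i * ln (ctr$i)))"
proof -
  define w where "w = p - ctr"
  have wt: "w \<in> tangent_dirs" unfolding w_def by (rule tangent_diff_simplex[OF ctr_simplex p])
  have qin: "ctr + t *\<^sub>R w \<in> open_simplex" if t: "0 \<le> t" "t \<le> 1" for t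
  proof (rule simplex_memI)
    fix i
    have "(ctr + t *\<^sub>R w) $ i = (1 - t) * ctr$i + t * p$i" unfolding w_def by (simp add: algebra_simps)
    moreover have "ctr$i > 0" "p$i > 0" using simplex_pos[OF ctr_simplex] simplex_pos[OF p] by auto
    ultimately show "0 < (ctr + t *\<^sub>R w) $ i" using t
      by (cases "t = 0") (auto intro!: add_pos_nonneg add_nonneg_pos mult_pos_pos)
  next
    show "(\<Sum>i\<in>UNIV. (ctr + t *\<^sub>R w) $ i) = 1"
      using simplex_sum[OF ctr_simplex] wt by (simp add: sum.distrib tangent_iff sum_distrib_left[symmetric])
  qed
  define f where "f t = \<phi> (ctr + t *\<^sub>R w) - (\<Sum>i\<in>UNIV. al \<phi> $ i * ln (ctr$i + t * w$i))" for t
  have fd: "(f has_real_derivative 0) (at t)" if t: "0 \<le> t" "t \<le> 1" for t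
  proof -
    have q: "ctr + t *\<^sub>R w \<in> open_simplex" by (rule qin[OF t])
    have qpos: "ctr$i + t * w$i > 0" for i using simplex_pos[OF q, of i] by simp
    have d1: "((\<lambda>t. \<phi> (ctr + t *\<^sub>R w)) has_real_derivative dir_deriv \<phi> w (ctr + t *\<^sub>R w)) (at t)"
      by (rule line_diff_at[OF reg ctr_simplex wt q])
    have dd: "dir_deriv \<phi> w (ctr + t *\<^sub>R w) = (\<Sum>i\<in>UNIV. al \<phi> $ i * (w$i / (ctr$i + t * w$i)))"
      unfolding dd_expand[OF reg q wt] ww_const[OF q] by (rule sum.cong) (simp_all add: field_simps)
    have d2: "((\<lambda>t. \<Sum>i\<in>UNIV. al \<phi> $ i * ln (ctr$i + t * w$i)) has_real_derivative
                (\<Sum>i\<in>UNIV. al \<phi> $ i * (w$i / (ctr$i + t * w$i)))) (at t)"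
    proof (rule DERIV_sum)
      fix i
      have "((\<lambda>t. ctr$i + t * w$i) has_real_derivative w$i) (at t)"
        by (auto intro!: derivative_eq_intros)
      from DERIV_chain2[OF DERIV_ln_divide[OF qpos[of i]] this]
      have "((\<lambda>t. ln (ctr$i + t * w$i)) has_real_derivative 1 / (ctr$i + t * w$i) * w$i) (at t)" .
      from DERIV_cmult[OF this, of "al \<phi> $ i"]
      show "((\<lambda>t. al \<phi> $ i * ln (ctr$i + t * w$i)) has_real_derivative al \<phi> $ i * (w$i / (ctr$i + t * w$i))) (at t)"
        by simp
    qed
    from DERIV_diff[OF d1 d2] show ?thesis unfolding f_def[abs_def] dd by simp
  qed
  have "f 1 = f 0"
  proof (rule DERIV_isconst2[of 0 1])
    show "continuous_on {0..1} f"
    proof (rule continuous_at_imp_continuous_on, rule ballI)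
      fix x :: real assume "x \<in> {0..1}"
      hence "(f has_real_derivative 0) (at x)" using fd by simp
      thus "isCont f x" by (rule DERIV_isCont)
    qed
    show "\<And>x. 0 < x \<Longrightarrow> x < 1 \<Longrightarrow> (f has_real_derivative 0) (at x)" using fd by simp
  qed simp_all
  moreover have "ctr + w = p" unfolding w_def by simp
  moreover have "ctr$i + w$i = p$i" for i unfolding w_def by simp
  ultimately show ?thesis unfolding f_def by simp
qed

lemma forward: "\<exists>\<pi>\<in>open_simplex. \<exists>c::real. \<forall>p\<in>open_simplex. \<phi> p = - cross_entropy \<pi> p + c"
proof -
  have "al \<phi> \<in> open_simplex" using al_bounds(1) al_sum[OF reg] by (intro simplex_memI) auto
  moreover have "\<forall>p\<in>open_simplex. \<phi> p = - cross_entropy (al \<phi>) p + (\<phi> ctr - (\<Sum>i\<in>UNIV. al \<phi> $ i * ln (ctr$i)))"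
    unfolding cross_entropy_def using phi_form by simp
  ultimately show ?thesis by blast
qed

end


lemma perturb_simplex:
  assumes q: "q \<in> open_simplex" and h: "h \<in> open_simplex"
  shows "perturb q h \<in> open_simplex"
proof -
  have s: "(\<Sum>j\<in>UNIV. q$j * h$j) > 0"
    using simplex_pos[OF q] simplex_pos[OF h] by (simp add: sum_pos)
  show ?thesis
  proof (rule simplex_memI)
    fix i show "0 < perturb q h $ i"
      unfolding perturb_def using s simplex_pos[OF q, of i] simplex_pos[OF h, of i] by simp
  next
    show "(\<Sum>i\<in>UNIV. perturb q h $ i) = 1"
      unfolding perturb_def using s by (simp add: sum_divide_distrib[symmetric])
  qed
qed

context
  fixes \<phi> :: "real^'n::finite \<Rightarrow> real" and \<pi> :: "real^'n" and c :: real
  assumes pi: "\<pi> \<in> open_simplex"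
  and form: "\<forall>p\<in>open_simplex. \<phi> p = - cross_entropy \<pi> p + c"
begin

lemma phi_eq: "p \<in> open_simplex \<Longrightarrow> \<phi> p = (\<Sum>i\<in>UNIV. \<pi>$i * ln (p$i)) + c"
  using form unfolding cross_entropy_def by simp

lemma dd_ce:
  assumes p: "p \<in> open_simplex" and v: "v \<in> tangent_dirs"
  shows "dir_deriv \<phi> v p = (\<Sum>i\<in>UNIV. \<pi>$i * (v$i / p$i))"
proof -
  have ev: "eventually (\<lambda>t. \<phi> (p + t *\<^sub>R v) = (\<Sum>i\<in>UNIV. \<pi>$i * ln (p$i + t * v$i)) + c) (nhds 0)"
    using eventually_in_simplex[OF p v] by (rule eventually_mono) (simp add: phi_eq)
  have "deriv (\<lambda>t. \<phi> (p + t *\<^sub>R v)) 0 = deriv (\<lambda>t. (\<Sum>i\<in>UNIV. \<pi>$i * ln (p$i + t * v$i)) + c) 0"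
    by (rule deriv_cong_ev[OF ev refl])
  also have "\<dots> = (\<Sum>i\<in>UNIV. \<pi>$i * (v$i / p$i))"
  proof (rule DERIV_imp_deriv)
    have "((\<lambda>t. \<Sum>i\<in>UNIV. \<pi>$i * ln (p$i + t * v$i)) has_real_derivative (\<Sum>i\<in>UNIV. \<pi>$i * (v$i / p$i))) (at 0)"
    proof (rule DERIV_sum)
      fix i
      have pp: "p$i + 0 * v$i > 0" using simplex_pos[OF p, of i] by simp
      have "((\<lambda>t. p$i + t * v$i) has_real_derivative v$i) (at 0)"
        by (auto intro!: derivative_eq_intros)
      from DERIV_chain2[OF DERIV_ln_divide[OF pp] this]
      have "((\<lambda>t. ln (p$i + t * v$i)) has_real_derivative 1 / (p$i + 0 * v$i) * v$i) (at 0)" .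
      from DERIV_cmult[OF this, of "\<pi>$i"]
      show "((\<lambda>t. \<pi>$i * ln (p$i + t * v$i)) has_real_derivative \<pi>$i * (v$i / p$i)) (at 0)"
        by simp
    qed
    from DERIV_add[OF this DERIV_const[of c]]
    show "((\<lambda>t. (\<Sum>i\<in>UNIV. \<pi>$i * ln (p$i + t * v$i)) + c) has_real_derivative (\<Sum>i\<in>UNIV. \<pi>$i * (v$i / p$i))) (at 0)"
      by simp
  qed
  finally show ?thesis unfolding dir_deriv_def .
qed

lemma log_div_ce:
  assumes p: "p \<in> open_simplex" and q: "q \<in> open_simplex"
  shows "log_div \<phi> q p = ln (\<Sum>i\<in>UNIV. \<pi>$i * (q$i / p$i)) - (\<Sum>i\<in>UNIV. \<pi>$i * (ln (q$i) - ln (p$i)))"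
proof -
  have "1 + dir_deriv \<phi> (q - p) p = 1 + (\<Sum>i\<in>UNIV. \<pi>$i * ((q$i - p$i) / p$i))"
    using dd_ce[OF p tangent_diff_simplex[OF p q]] by simp
  also have "\<dots> = (\<Sum>i\<in>UNIV. \<pi>$i * (q$i / p$i))"
  proof -
    have "(\<Sum>i\<in>UNIV. \<pi>$i * ((q$i - p$i) / p$i)) = (\<Sum>i\<in>UNIV. \<pi>$i * (q$i / p$i) - \<pi>$i)"
    proof (rule sum.cong[OF refl])
      fix i :: 'n
      show "\<pi>$i * ((q$i - p$i) / p$i) = \<pi>$i * (q$i / p$i) - \<pi>$i"
        using simplex_pos[OF p, of i] by (simp add: field_simps)
    qed
    thus ?thesis using simplex_sum[OF pi] by (simp add: sum_subtractf)
  qed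
  finally have "1 + dir_deriv \<phi> (q - p) p = (\<Sum>i\<in>UNIV. \<pi>$i * (q$i / p$i))" .
  moreover have "\<phi> q - \<phi> p = (\<Sum>i\<in>UNIV. \<pi>$i * (ln (q$i) - ln (p$i)))"
    using phi_eq[OF p] phi_eq[OF q] by (simp add: sum_subtractf algebra_simps)
  ultimately show ?thesis unfolding log_div_def by simp
qed

lemma backward:
  "\<forall>p\<in>open_simplex. \<forall>q\<in>open_simplex. \<forall>h\<in>open_simplex.
      log_div \<phi> (perturb q h) (perturb p h) = log_div \<phi> q p"
proof (intro ballI)
  fix p q h :: "real^'n" assume p: "p \<in> open_simplex" and q: "q \<in> open_simplex" and h: "h \<in> open_simplex"
  define sp where "sp = (\<Sum>j\<in>UNIV. p$j * h$j)"
  define sq where "sq = (\<Sum>j\<in>UNIV. q$j * h$j)"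
  have sp: "sp > 0" unfolding sp_def using simplex_pos[OF p] simplex_pos[OF h] by (simp add: sum_pos)
  have sq: "sq > 0" unfolding sq_def using simplex_pos[OF q] simplex_pos[OF h] by (simp add: sum_pos)
  have pos: "p$i > 0" "q$i > 0" "h$i > 0" for i using simplex_pos p q h by auto
  have pc: "perturb p h $ i = p$i * h$i / sp" "perturb q h $ i = q$i * h$i / sq" for i
    unfolding perturb_def sp_def sq_def by simp_all
  have r1: "perturb q h $ i / perturb p h $ i = (sp / sq) * (q$i / p$i)" for i
    unfolding pc using pos[of i] sp sq by (simp add: field_simps)
  have r2: "ln (perturb q h $ i) - ln (perturb p h $ i) = (ln (q$i) - ln (p$i)) + (ln sp - ln sq)" for i
    unfolding pc using pos[of i] sp sq by (simp add: ln_div ln_mult)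
  have Spos: "(\<Sum>i\<in>UNIV. \<pi>$i * (q$i / p$i)) > 0"
    using simplex_pos[OF pi] pos by (simp add: sum_pos)
  have "log_div \<phi> (perturb q h) (perturb p h)
      = ln (\<Sum>i\<in>UNIV. \<pi>$i * ((sp / sq) * (q$i / p$i))) - (\<Sum>i\<in>UNIV. \<pi>$i * ((ln (q$i) - ln (p$i)) + (ln sp - ln sq)))"
    unfolding log_div_ce[OF perturb_simplex[OF p h] perturb_simplex[OF q h]] r1 r2 ..
  also have "(\<Sum>i\<in>UNIV. \<pi>$i * ((sp / sq) * (q$i / p$i))) = (sp / sq) * (\<Sum>i\<in>UNIV. \<pi>$i * (q$i / p$i))"
    by (simp add: sum_distrib_left algebra_simps)
  also have "(\<Sum>i\<in>UNIV. \<pi>$i * ((ln (q$i) - ln (p$i)) + (ln sp - ln sq)))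
      = (\<Sum>i\<in>UNIV. \<pi>$i * (ln (q$i) - ln (p$i))) + (ln sp - ln sq)"
    using simplex_sum[OF pi] by (simp add: distrib_left sum.distrib sum_distrib_right[symmetric])
  also have "ln ((sp / sq) * (\<Sum>i\<in>UNIV. \<pi>$i * (q$i / p$i))) = ln sp - ln sq + ln (\<Sum>i\<in>UNIV. \<pi>$i * (q$i / p$i))"
    using sp sq Spos by (simp add: ln_mult ln_div)
  finally show "log_div \<phi> (perturb q h) (perturb p h) = log_div \<phi> q p"
    unfolding log_div_ce[OF p q] by simp
qed

end

theorem mainTheorem14:
  fixes \<phi> :: "real^'n::finite \<Rightarrow> real"
  assumes "CARD('n) \<ge> 2"
    and "regular_exp_concave \<phi>"
  shows "(\<forall>p\<in>open_simplex. \<forall>q\<in>open_simplex. \<forall>h\<in>open_simplex.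
            log_div \<phi> (perturb q h) (perturb p h) = log_div \<phi> q p)
         \<longleftrightarrow> (\<exists>\<pi>\<in>open_simplex. \<exists>c::real. \<forall>p\<in>open_simplex.
            \<phi> p = - cross_entropy \<pi> p + c)"
proof
  assume inv: "\<forall>p\<in>open_simplex. \<forall>q\<in>open_simplex. \<forall>h\<in>open_simplex.
            log_div \<phi> (perturb q h) (perturb p h) = log_div \<phi> q p"
  show "\<exists>\<pi>\<in>open_simplex. \<exists>c::real. \<forall>p\<in>open_simplex. \<phi> p = - cross_entropy \<pi> p + c"
    by (rule forward[OF assms(2) inv assms(1)])
next
  assume "\<exists>\<pi>\<in>open_simplex. \<exists>c::real. \<forall>p\<in>open_simplex. \<phi> p = - cross_entropy \<pi> p + c"
  then obtain \<pi> c where "\<pi> \<in> open_simplex" "\<forall>p\<in>open_simplex. \<phi> p = - cross_entropy \<pi> p + c" by blast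
  thus "\<forall>p\<in>open_simplex. \<forall>q\<in>open_simplex. \<forall>h\<in>open_simplex.
            log_div \<phi> (perturb q h) (perturb p h) = log_div \<phi> q p"
    by (rule backward)
qed


end
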